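(* Let $\mu\in(0,1)$ and $\beta(a)=\frac{\mu}{1+a}$. Let $w$ be the (measure-valued) solution of $$\partial_\tau w+\partial_b((1-b)w)+e^{\tau}\beta(e^{\tau}b)w=0,\qquad w(\tau,0)=\int_0^\infty e^{\tau}\beta(e^{\tau}b)w(\tau,b)\,db,$$ with initial condition $w(0,\cdot)=\delta_0$ (the Dirac mass at $0$). Let $W(\tau,b)=C(\tau)(1-b)^{\mu-1}(1+e^{\tau}b)^{-\mu}$ on $[0,1)$ with $C(\tau)>0$ such that $\int_0^1W(\tau,b)db=1$. Then for all $\tau\ge0$, $$\|W(\tau,\cdot)-w(\tau,\cdot)\|_{TV}\ge e^{-\mu\tau}.$$
   Context: $\|\cdot\|_{TV}$ denotes the total variation norm of measures on $[0,1)$, $W(\tau,\cdot)$ being identified with the measure $W(\tau,b)\,db$. *)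

theory Defs
  imports "HOL-Probability.Probability"
begin

definition beta :: "real \<Rightarrow> real \<Rightarrow> real" where
  "beta \<mu> a = \<mu> / (1 + a)"

definition kappa :: "real \<Rightarrow> real \<Rightarrow> real \<Rightarrow> real" where
  "kappa \<mu> \<tau> b = exp \<tau> * beta \<mu> (exp \<tau> * b)"

definition test_fun :: "(real \<Rightarrow> real) \<Rightarrow> bool" where
  "test_fun \<phi> \<longleftrightarrow> \<phi> C1_differentiable_on UNIV \<and> (\<exists>R. \<forall>x. \<bar>x\<bar> > R \<longrightarrow> \<phi> x = 0)"

text \<open>Measure-valued (weak) solution of
  \<partial>_\<tau> w + \<partial>_b((1-b)w) + e^\<tau>\<beta>(e^\<tau> b) w = 0,
  w(\<tau>,0) = \<integral>_0^\<infinity> e^\<tau>\<beta>(e^\<tau> b) w(\<tau>,b) db,  w(0) = \<delta>_0,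
  for \<tau> \<ge> 0: a family of finite (nonnegative) Borel measures on [0,\<infinity>),
  of locally bounded total mass, satisfying for every test function \<phi>
  \<integral>\<phi> dw_\<tau> = \<integral>\<phi> dw_0 + \<integral>_0^\<tau> \<integral> ((1-b)\<phi>'(b) + \<kappa>(s,b)(\<phi>(0) - \<phi>(b))) dw_s(b) ds.\<close>
definition measure_solution :: "real \<Rightarrow> (real \<Rightarrow> real measure) \<Rightarrow> bool" where
  "measure_solution \<mu> w \<longleftrightarrow>
     (\<forall>\<tau>\<ge>0. finite_measure (w \<tau>) \<and> sets (w \<tau>) = sets borel \<and> emeasure (w \<tau>) {..<0} = 0) \<and>
     (\<forall>T\<ge>0. \<exists>M. \<forall>\<tau>\<in>{0..T}. measure (w \<tau>) UNIV \<le> M) \<and>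
     w 0 = return borel 0 \<and>
     (\<forall>\<phi>. test_fun \<phi> \<longrightarrow> (\<forall>\<tau>\<ge>0.
        ((\<lambda>s. LINT b|w s. (1 - b) * deriv \<phi> b + kappa \<mu> s b * (\<phi> 0 - \<phi> b))
           has_integral ((LINT b|w \<tau>. \<phi> b) - (LINT b|w 0. \<phi> b))) {0..\<tau>}))"

definition tv_norm :: "real set \<Rightarrow> (real set \<Rightarrow> real) \<Rightarrow> real" where
  "tv_norm S \<nu> = (SUP P\<in>{P. finite P \<and> disjoint P \<and> \<Union>P = S \<and> P \<subseteq> sets borel}. \<Sum>A\<in>P. \<bar>\<nu> A\<bar>)"

definition Wprof :: "real \<Rightarrow> (real \<Rightarrow> real) \<Rightarrow> real \<Rightarrow> real \<Rightarrow> real" where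
  "Wprof \<mu> C \<tau> b = C \<tau> * (1 - b) powr (\<mu> - 1) * (1 + exp \<tau> * b) powr (-\<mu>)"

end

theory Submission
  imports Defs
begin


definition q :: "nat \<Rightarrow> real \<Rightarrow> real" where "q n x = (max 0 x) ^ n"

lemma q_deriv:
  assumes "n \<ge> 2"
  shows "(q n has_real_derivative real n * q (n-1) x) (at x)"
proof (cases "x = 0")
  case False
  show ?thesis
  proof (cases "x > 0")
    case True
    have ev: "\<forall>\<^sub>F y in nhds x. y ^ n = q n y"
      using eventually_nhds_in_open[of "{0<..}" x] True
      by (auto elim!: eventually_mono simp: q_def)
    have "((\<lambda>y. y ^ n) has_real_derivative real n * x ^ (n-1)) (at x)"
      by (rule derivative_eq_intros refl | simp)+
    then have "(q n has_real_derivative real n * x ^ (n-1)) (at x)"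
      using DERIV_cong_ev[OF refl ev refl] by blast
    then show ?thesis
      using True by (simp add: q_def)
  next
    case f2: False
    with False have x: "x < 0" by simp
    have ev: "\<forall>\<^sub>F y in nhds x. (\<lambda>y. 0::real) y = q n y"
      using eventually_nhds_in_open[of "{..<0}" x] x assms
      by (auto elim!: eventually_mono simp: q_def max_def)
    have "((\<lambda>y. 0::real) has_real_derivative 0) (at x)" by simp
    then have "(q n has_real_derivative 0) (at x)"
      using DERIV_cong_ev[OF refl ev refl] by blast
    moreover have "n - 1 > 0" using assms by simp
    ultimately show ?thesis
      using x assms by (simp add: q_def zero_power)
  qed
next
  case True
  have q0: "q n 0 = 0" using assms by (simp add: q_def)
  have "((\<lambda>y. (q n y - q n 0) / (y - 0)) \<longlongrightarrow> 0) (at 0)"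
  proof (rule Lim_null_comparison)
    have ev1: "\<forall>\<^sub>F y in at (0::real). \<bar>y\<bar> < 1"
      using eventually_at_ball'[of 1 "0::real" UNIV] by (auto elim!: eventually_mono simp: dist_real_def)
    show "\<forall>\<^sub>F y in at 0. norm ((q n y - q n 0) / (y - 0)) \<le> \<bar>y\<bar>"
    proof (rule eventually_mono[OF ev1])
      fix y :: real assume y1: "\<bar>y\<bar> < 1"
      have "\<bar>q n y\<bar> \<le> \<bar>y\<bar> ^ n" unfolding q_def
        using assms by (cases "0 \<le> y") (auto simp: power_abs zero_power)
      also have "\<dots> \<le> \<bar>y\<bar> ^ 2" using y1 assms by (intro power_decreasing) auto
      finally have a: "\<bar>q n y\<bar> \<le> \<bar>y\<bar> * \<bar>y\<bar>" by (simp add: power2_eq_square)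
      show "norm ((q n y - q n 0) / (y - 0)) \<le> \<bar>y\<bar>"
      proof (cases "y = 0")
        case True then show ?thesis by (simp add: q_def)
      next
        case False
        then show ?thesis using a q0 by (simp add: abs_divide divide_le_eq)
      qed
    qed
    show "((\<lambda>y. \<bar>y\<bar>) \<longlongrightarrow> 0) (at (0::real))"
      using tendsto_rabs[OF tendsto_ident_at[of "0::real" UNIV]] by simp
  qed
  then have "(q n has_real_derivative 0) (at 0)" by (simp add: DERIV_def del: diff_0_right) 
  moreover have "n - 1 > 0" using assms by simp
  ultimately show ?thesis using True assms by (simp add: q_def zero_power)
qed

lemma q_cont [continuous_intros]: "continuous_on S f \<Longrightarrow> continuous_on S (\<lambda>x. q n (f x))"
  unfolding q_def by (intro continuous_intros)

lemma q_nonpos: "x \<le> 0 \<Longrightarrow> 1 \<le> n \<Longrightarrow> q n x = 0"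
  unfolding q_def by (simp add: max_def zero_power)

definition gg :: "real \<Rightarrow> real \<Rightarrow> real" where
  "gg e z = q 3 (e^2 - (z-1)^2) / e^6"
definition gd :: "real \<Rightarrow> real \<Rightarrow> real" where
  "gd e z = - 6 * (z-1) * q 2 (e^2 - (z-1)^2) / e^6"
definition gdd :: "real \<Rightarrow> real \<Rightarrow> real" where
  "gdd e z = (24 * (z-1)^2 * q 1 (e^2 - (z-1)^2) - 6 * q 2 (e^2 - (z-1)^2)) / e^6"
definition Tf :: "real \<Rightarrow> real \<Rightarrow> real" where "Tf e z = z * gd e z"
definition Td :: "real \<Rightarrow> real \<Rightarrow> real" where "Td e z = gd e z + z * gdd e z"
definition Sf :: "real \<Rightarrow> real \<Rightarrow> real" where "Sf e z = z * Td e z"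

lemma inner_deriv: "((\<lambda>z. e^2 - (z-1)^2) has_real_derivative -2*(z-1)) (at z)"
  by (auto intro!: derivative_eq_intros)

lemma gg_deriv: "(gg e has_real_derivative gd e z) (at z)"
proof -
  have d: "((\<lambda>z. q 3 (e^2 - (z-1)^2)) has_real_derivative real 3 * q (3-1) (e^2 - (z-1)^2) * (-2*(z-1))) (at z)"
    by (rule DERIV_chain2[OF q_deriv inner_deriv]) simp
  have "((\<lambda>z. q 3 (e^2 - (z-1)^2) / e^6) has_real_derivative (real 3 * q (3-1) (e^2 - (z-1)^2) * (-2*(z-1))) / e^6) (at z)"
    by (rule DERIV_cdivide[OF d])
  moreover have "gg e = (\<lambda>z. q 3 (e^2 - (z-1)^2) / e^6)" by (auto simp: gg_def)
  ultimately show ?thesis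
    by (rule_tac DERIV_cong) (auto simp: gd_def algebra_simps)
qed

lemma gd_deriv: "(gd e has_real_derivative gdd e z) (at z)"
proof -
  have d: "((\<lambda>z. q 2 (e^2 - (z-1)^2)) has_real_derivative real 2 * q (2-1) (e^2 - (z-1)^2) * (-2*(z-1))) (at z)"
    by (rule DERIV_chain2[OF q_deriv inner_deriv]) simp
  have d2: "((\<lambda>z. -6*(z-1)) has_real_derivative -6) (at z)"
    by (auto intro!: derivative_eq_intros)
  have "((\<lambda>z. (-6*(z-1)) * q 2 (e^2 - (z-1)^2)) has_real_derivative
      (-6) * q 2 (e^2 - (z-1)^2) + (real 2 * q (2-1) (e^2 - (z-1)^2) * (-2*(z-1))) * (-6*(z-1))) (at z)"
    by (rule DERIV_mult[OF d2 d])
  from DERIV_cdivide[OF this, of "e^6"]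
  have "((\<lambda>z. (-6*(z-1)) * q 2 (e^2 - (z-1)^2) / e^6) has_real_derivative
      ((-6) * q 2 (e^2 - (z-1)^2) + (real 2 * q (2-1) (e^2 - (z-1)^2) * (-2*(z-1))) * (-6*(z-1))) / e^6) (at z)" .
  moreover have "gd e = (\<lambda>z. (-6*(z-1)) * q 2 (e^2 - (z-1)^2) / e^6)" by (auto simp: gd_def)
  ultimately show ?thesis
    by (rule_tac DERIV_cong) (auto simp: gdd_def algebra_simps power2_eq_square)
qed

lemma Tf_deriv: "(Tf e has_real_derivative Td e z) (at z)"
proof -
  have "((\<lambda>z. z * gd e z) has_real_derivative 1 * gd e z + gdd e z * z) (at z)"
    by (rule DERIV_mult[OF DERIV_ident gd_deriv])
  moreover have "Tf e = (\<lambda>z. z * gd e z)" by (auto simp: Tf_def)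
  ultimately show ?thesis
    by (rule_tac DERIV_cong) (auto simp: Td_def algebra_simps)
qed

lemma gg_cont: "continuous_on UNIV (gg e)"
  unfolding gg_def[abs_def] divide_inverse by (intro continuous_intros)
lemma gd_cont: "continuous_on UNIV (gd e)"
  unfolding gd_def[abs_def] divide_inverse by (intro continuous_intros)
lemma gdd_cont: "continuous_on UNIV (gdd e)"
  unfolding gdd_def[abs_def] divide_inverse by (intro continuous_intros)
lemma Tf_cont: "continuous_on UNIV (Tf e)"
  unfolding Tf_def[abs_def] using gd_cont by (intro continuous_intros) auto
lemma Td_cont: "continuous_on UNIV (Td e)"
  unfolding Td_def[abs_def] using gd_cont gdd_cont by (intro continuous_intros) auto
lemma Sf_cont: "continuous_on UNIV (Sf e)"
  unfolding Sf_def[abs_def] using Td_cont by (intro continuous_intros) auto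

lemma supp_aux: fixes e z :: real assumes "0 < e" "e \<le> \<bar>z-1\<bar>" shows "e^2 - (z-1)^2 \<le> 0"
proof -
  have "e^2 \<le> \<bar>z-1\<bar>^2" using power_mono[OF assms(2), of 2] assms by simp
  then show ?thesis by simp
qed

lemma supp:
  assumes "0 < e" "e \<le> \<bar>z-1\<bar>"
  shows "gg e z = 0" "gd e z = 0" "gdd e z = 0" "Tf e z = 0" "Td e z = 0" "Sf e z = 0"
  using supp_aux[OF assms]
  by (auto simp: gg_def gd_def gdd_def Tf_def Td_def Sf_def q_nonpos)

lemma gg_bounds:
  assumes "0 < e"
  shows "0 \<le> gg e z" "gg e z \<le> 1" "gg e 1 = 1"
proof -
  have "max 0 (e^2 - (z-1)^2) \<le> e^2" by auto
  then have "q 3 (e^2 - (z-1)^2) \<le> (e^2)^3" unfolding q_def by (intro power_mono) auto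
  then show "gg e z \<le> 1" using assms by (simp add: gg_def divide_le_eq flip: power_mult)
  show "0 \<le> gg e z" using assms by (simp add: gg_def q_def)
  show "gg e 1 = 1" using assms by (simp add: gg_def q_def flip: power_mult)
qed

lemma bounded_supp:
  fixes f :: "real \<Rightarrow> real"
  assumes "continuous_on UNIV f" "\<And>z. e \<le> \<bar>z-1\<bar> \<Longrightarrow> f z = 0"
  shows "\<exists>B\<ge>0. \<forall>z. \<bar>f z\<bar> \<le> B"
proof -
  have "compact (f ` {1-e..1+e})"
    by (rule compact_continuous_image[OF continuous_on_subset[OF assms(1)]]) auto
  then obtain B where B: "\<forall>y\<in>f ` {1-e..1+e}. \<bar>y\<bar> \<le> B"
    using compact_imp_bounded bounded_real by metis
  show ?thesis
  proof (intro exI[of _ "max B 0"] conjI allI)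
    fix z
    show "\<bar>f z\<bar> \<le> max B 0"
    proof (cases "e \<le> \<bar>z-1\<bar>")
      case True then show ?thesis using assms(2) by simp
    next
      case False
      then have "z \<in> {1-e..1+e}" by auto
      then have "\<bar>f z\<bar> \<le> B" using B by blast
      then show ?thesis by simp
    qed
  qed simp
qed




lemma tf_comp:
  fixes h h' :: "real \<Rightarrow> real"
  assumes d: "\<And>z. (h has_real_derivative h' z) (at z)" and c: "continuous_on UNIV h'"
    and s: "\<And>z. e \<le> \<bar>z-1\<bar> \<Longrightarrow> h z = 0" and e: "e \<le> 1/2" and r: "0 \<le> r"
  shows "test_fun (\<lambda>b. h (exp r * (1-b)))"
    and "deriv (\<lambda>b. h (exp r * (1-b))) = (\<lambda>b. - exp r * h' (exp r * (1-b)))"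
proof -
  have inner: "((\<lambda>b. exp r * (1-b)) has_real_derivative - exp r) (at b)" for b
    by (auto intro!: derivative_eq_intros)
  have D: "((\<lambda>b. h (exp r * (1-b))) has_real_derivative - exp r * h' (exp r * (1-b))) (at b)" for b
    using DERIV_chain2[OF d inner, of b] by (simp add: mult.commute)
  then show "deriv (\<lambda>b. h (exp r * (1-b))) = (\<lambda>b. - exp r * h' (exp r * (1-b)))"
    using DERIV_imp_deriv by blast
  have cc: "continuous_on UNIV (\<lambda>b. - exp r * h' (exp r * (1-b)))"
    by (intro continuous_intros continuous_on_compose2[OF c]) auto
  have C1: "(\<lambda>b. h (exp r * (1-b))) C1_differentiable_on UNIV"
    unfolding C1_differentiable_on_def
    apply (rule exI[of _ "\<lambda>b. - exp r * h' (exp r * (1-b))"])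
    using D cc by (auto simp: has_real_derivative_iff_has_vector_derivative)
  have "h (exp r * (1-b)) = 0" if "\<bar>b\<bar> > 1" for b
  proof (rule s)
    have er: "1 \<le> exp r" using r by simp
    show "e \<le> \<bar>exp r * (1-b) - 1\<bar>"
    proof (cases "b > 1")
      case True
      then have "exp r * (1-b) < 0" by (simp add: mult_pos_neg)
      then show ?thesis using e by simp
    next
      case False
      then have "b < -1" using that by auto
      then have "1 * (1-b) \<le> exp r * (1-b)" using er by (intro mult_right_mono) auto
      then have "1 - b \<le> exp r * (1-b)" by (metis mult_1_left)
      then have ge1: "exp r * (1-b) - 1 \<ge> 1" using \<open>b < -1\<close> by linarith
      show ?thesis by (subst abs_of_nonneg) (use ge1 e in linarith)+
    qed
  qed
  then show "test_fun (\<lambda>b. h (exp r * (1-b)))"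
    unfolding test_fun_def using C1 by blast
qed

lemma meas_comp:
  fixes h :: "real \<Rightarrow> real"
  assumes "continuous_on UNIV h"
  shows "(\<lambda>b. h (exp r * (1-b))) \<in> borel_measurable borel"
  by (intro borel_measurable_continuous_onI continuous_on_compose2[OF assms]) (auto intro!: continuous_intros)

lemma kap_bounds:
  assumes "0 < \<mu>" "0 \<le> b"
  shows "0 \<le> kappa \<mu> u b" "kappa \<mu> u b \<le> exp u * \<mu>"
proof -
  have "1 \<le> 1 + exp u * b" using assms by simp
  then have pos: "0 < 1 + exp u * b" by linarith
  then have "\<mu> / (1 + exp u * b) \<le> \<mu> / 1" using assms pos by (intro divide_left_mono) auto
  then have "exp u * (\<mu> / (1 + exp u * b)) \<le> exp u * \<mu>" by (intro mult_left_mono) auto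
  then show "kappa \<mu> u b \<le> exp u * \<mu>"
    unfolding kappa_def beta_def .
  show "0 \<le> kappa \<mu> u b" unfolding kappa_def beta_def using assms
    by (intro mult_nonneg_nonneg divide_nonneg_pos) (auto intro: add_pos_nonneg)
qed

lemma kap_K:
  assumes "0 < \<mu>" "0 \<le> u" "u \<le> t'" "\<bar>exp t' * (1-b) - 1\<bar> < e" "e \<le> 1/2" "0 \<le> e"
  shows "kappa \<mu> u b \<le> \<mu> / (1 - e)"
proof -
  define z where "z = exp t' * (1-b)"
  have z0: "0 < z" using assms unfolding z_def by auto
  have z1: "z < 1 + e" using assms unfolding z_def by auto
  have "exp u * (1-b) = exp (u - t') * z" unfolding z_def by (simp add: exp_diff)
  also have "\<dots> \<le> 1 * z" using z0 assms by (intro mult_right_mono) auto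
  finally have a: "exp u * (1-b) \<le> z" by simp
  have eu: "1 \<le> exp u" using assms by simp
  have "exp u * b = exp u - exp u * (1-b)" by (simp add: algebra_simps)
  then have "1 + exp u * b \<ge> exp u - e" using a z1 by linarith
  moreover have "exp u - e \<ge> exp u * (1 - e)" using eu assms
  proof -
    have "e * 1 \<le> e * exp u" using eu assms by (intro mult_left_mono) auto
    then show ?thesis by (simp add: algebra_simps)
  qed
  ultimately have den: "exp u * (1 - e) \<le> 1 + exp u * b" by linarith
  have p: "0 < exp u * (1 - e)" using assms by simp
  have "0 < 1 + exp u * b" using den p by linarith
  have "kappa \<mu> u b = (exp u * \<mu>) / (1 + exp u * b)" unfolding kappa_def beta_def by simp
  also have "\<dots> \<le> (exp u * \<mu>) / (exp u * (1 - e))"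
    using den p assms \<open>0 < 1 + exp u * b\<close> by (intro divide_left_mono mult_pos_pos) auto
  also have "\<dots> = \<mu> / (1 - e)" by simp
  finally show ?thesis .
qed

lemma kap_meas: "(\<lambda>b. kappa \<mu> u b) \<in> borel_measurable borel"
  unfolding kappa_def beta_def by measurable




locale setting =
  fixes \<mu> :: real and w :: "real \<Rightarrow> real measure" and M T e :: real
  assumes mu0: "0 < \<mu>" and mu1: "\<mu> < 1" and sol: "measure_solution \<mu> w"
    and Mb: "\<And>u. 0 \<le> u \<Longrightarrow> u \<le> T \<Longrightarrow> measure (w u) UNIV \<le> M"
    and T0: "0 \<le> T" and e0: "0 < e" and e1: "e \<le> 1/2"
begin

lemma fin: "0 \<le> u \<Longrightarrow> finite_measure (w u)"
  using sol unfolding measure_solution_def by auto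
lemma sets_w: "0 \<le> u \<Longrightarrow> sets (w u) = sets borel"
  using sol unfolding measure_solution_def by auto
lemma space_w: "0 \<le> u \<Longrightarrow> space (w u) = UNIV"
  using sets_eq_imp_space_eq[OF sets_w] by simp
lemma neg0: "0 \<le> u \<Longrightarrow> emeasure (w u) {..<0} = 0"
  using sol unfolding measure_solution_def by auto
lemma w0: "w 0 = return borel 0"
  using sol unfolding measure_solution_def by auto
lemma weak: "test_fun \<phi> \<Longrightarrow> 0 \<le> s \<Longrightarrow>
  ((\<lambda>u. LINT b|w u. (1 - b) * deriv \<phi> b + kappa \<mu> u b * (\<phi> 0 - \<phi> b))
     has_integral ((LINT b|w s. \<phi> b) - (LINT b|w 0. \<phi> b))) {0..s}"
  using sol unfolding measure_solution_def by auto

lemma M0: "0 \<le> M"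
  using Mb[of 0] T0 measure_nonneg[of "w 0" UNIV] by linarith

lemma AEnn: "0 \<le> u \<Longrightarrow> AE b in w u. 0 \<le> b"
proof -
  assume u: "0 \<le> u"
  have "{..<0::real} \<in> null_sets (w u)"
    using neg0[OF u] sets_w[OF u] by auto
  then show ?thesis
    by (rule AE_I') auto
qed

lemma meas: assumes "f \<in> borel_measurable borel" "0 \<le> u" shows "f \<in> borel_measurable (w u)"
  by (subst measurable_cong_sets[OF sets_w[OF assms(2)] refl]) (rule assms(1))

lemma integ:
  fixes f :: "real \<Rightarrow> real" and B :: real
  assumes "0 \<le> u" "f \<in> borel_measurable borel" "\<And>b. 0 \<le> b \<Longrightarrow> \<bar>f b\<bar> \<le> B"
  shows "integrable (w u) f"
proof -
  interpret finite_measure "w u" by (rule fin[OF assms(1)])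
  show ?thesis
    by (rule integrable_const_bound[where B=B])
       (use AEnn[OF assms(1)] assms(3) meas[OF assms(2,1)] in \<open>auto elim!: eventually_mono\<close>)
qed

lemma intbound:
  assumes "0 \<le> u" "u \<le> T" "\<And>b. 0 \<le> b \<Longrightarrow> \<bar>f b\<bar> \<le> D"
  shows "\<bar>LINT b|w u. f b\<bar> \<le> D * M"
proof -
  interpret finite_measure "w u" by (rule fin[OF assms(1)])
  have D0: "0 \<le> D" using assms(3)[of 0] by simp
  have "\<bar>LINT b|w u. f b\<bar> \<le> (LINT b|w u. norm (f b))"
    using integral_norm_bound[of "w u" f] by simp
  also have "\<dots> \<le> (LINT b|w u. D)"
    by (rule integral_mono_AE') (use AEnn[OF assms(1)] assms(3) D0 in \<open>auto elim!: eventually_mono\<close>)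
  also have "\<dots> = measure (w u) UNIV * D" using space_w[OF assms(1)] by simp
  also have "\<dots> \<le> M * D" using Mb[OF assms(1,2)] D0 by (intro mult_right_mono) auto
  finally show ?thesis by (simp add: mult.commute)
qed

definition F :: "(real \<Rightarrow> real) \<Rightarrow> real \<Rightarrow> real" where
  "F \<phi> u = (LINT b|w u. \<phi> b)"
definition Gf :: "(real \<Rightarrow> real) \<Rightarrow> real \<Rightarrow> real" where
  "Gf \<phi> u = (LINT b|w u. (1 - b) * deriv \<phi> b + kappa \<mu> u b * (\<phi> 0 - \<phi> b))"

lemma interval_int:
  assumes "test_fun \<phi>" "0 \<le> t" "t \<le> s"
  shows "(Gf \<phi> has_integral (F \<phi> s - F \<phi> t)) {t..s}"
proof -
  have hs: "(Gf \<phi> has_integral (F \<phi> s - F \<phi> 0)) {0..s}"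
    using weak[OF assms(1), of s] assms unfolding F_def Gf_def by simp
  have ht: "(Gf \<phi> has_integral (F \<phi> t - F \<phi> 0)) {0..t}"
    using weak[OF assms(1), of t] assms unfolding F_def Gf_def by simp
  have "Gf \<phi> integrable_on {t..s}"
    by (rule integrable_subinterval_real[OF has_integral_integrable[OF hs]]) (use assms in auto)
  then obtain j where j: "(Gf \<phi> has_integral j) {t..s}" by blast
  have "(Gf \<phi> has_integral (F \<phi> t - F \<phi> 0 + j)) {0..s}"
    by (rule has_integral_combine[OF _ _ ht j]) (use assms in auto)
  then have "F \<phi> t - F \<phi> 0 + j = F \<phi> s - F \<phi> 0"
    using hs has_integral_unique by blast
  then have "j = F \<phi> s - F \<phi> t" by linarith
  then show ?thesis using j by simp
qed

lemma lip:
  assumes test: "test_fun \<phi>" and der: "deriv \<phi> = \<phi>d" and A: "\<And>b. \<bar>\<phi> b\<bar> \<le> A"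
    and B: "\<And>b. 0 \<le> b \<Longrightarrow> \<bar>(1-b) * \<phi>d b\<bar> \<le> B"
    and ts: "0 \<le> t" "t \<le> s" "s \<le> T"
  shows "\<bar>F \<phi> s - F \<phi> t\<bar> \<le> (s - t) * ((B + 2*(exp T*\<mu>)*A) * M)"
proof -
  have A0: "0 \<le> A" using A[of 0] by simp
  have B0: "0 \<le> B" using B[of 0] by simp
  have pt: "\<bar>(1-b) * deriv \<phi> b + kappa \<mu> u b * (\<phi> 0 - \<phi> b)\<bar> \<le> B + 2*(exp T*\<mu>)*A"
    if u: "u \<in> {t..s}" and b: "0 \<le> b" for u b
  proof -
    have k0: "0 \<le> kappa \<mu> u b" using kap_bounds[OF mu0 b] by simp
    have "kappa \<mu> u b \<le> exp u * \<mu>" using kap_bounds[OF mu0 b] by simp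
    also have "\<dots> \<le> exp T * \<mu>" using u ts mu0 by (intro mult_right_mono) auto
    finally have k1: "kappa \<mu> u b \<le> exp T * \<mu>" .
    have d: "\<bar>\<phi> 0 - \<phi> b\<bar> \<le> 2*A" using A[of 0] A[of b] by linarith
    have "\<bar>kappa \<mu> u b * (\<phi> 0 - \<phi> b)\<bar> = kappa \<mu> u b * \<bar>\<phi> 0 - \<phi> b\<bar>"
      using k0 by (simp add: abs_mult)
    also have "\<dots> \<le> (exp T * \<mu>) * (2*A)"
      using k0 k1 d by (intro mult_mono) auto
    finally have "\<bar>kappa \<mu> u b * (\<phi> 0 - \<phi> b)\<bar> \<le> 2*(exp T*\<mu>)*A" by simp
    moreover have "\<bar>(1-b) * deriv \<phi> b\<bar> \<le> B" using B[OF b] der by simp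
    ultimately show ?thesis by linarith
  qed
  have bnd: "norm (Gf \<phi> u) \<le> (B + 2*(exp T*\<mu>)*A) * M" if u: "u \<in> {t..s}" for u
    unfolding Gf_def real_norm_def
    by (rule intbound) (use u ts pt in auto)
  have hb: "(Gf \<phi> has_integral (F \<phi> s - F \<phi> t)) (cbox t s)"
    using interval_int[OF test ts(1,2)] by simp
  have c0: "0 \<le> (B + 2*(exp T*\<mu>)*A) * M" using A0 B0 M0 mu0 by simp
  have bnd': "\<And>x. x \<in> cbox t s \<Longrightarrow> norm (Gf \<phi> x) \<le> (B + 2*(exp T*\<mu>)*A) * M"
    using bnd by simp
  from has_integral_bound[OF c0 hb bnd'] show ?thesis using ts by (simp add: mult.commute)
qed

end



lemma iter:
  fixes a :: "nat \<Rightarrow> real"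
  assumes st: "\<And>k. k < N \<Longrightarrow> a (Suc k) \<ge> (1-x) * a k - c"
    and x: "0 \<le> x" "x \<le> 1" and c: "0 \<le> c" and a0: "a 0 = 1"
  shows "a N \<ge> (1-x)^N - real N * c"
proof -
  have "k \<le> N \<longrightarrow> a k \<ge> (1-x)^k - real k * c" for k
  proof (induction k)
    case 0 then show ?case using a0 by simp
  next
    case (Suc k)
    show ?case
    proof
      assume k: "Suc k \<le> N"
      then have ih: "a k \<ge> (1-x)^k - real k * c" using Suc by simp
      have "(1-x) * ((1-x)^k - real k * c) \<le> (1-x) * a k"
        using ih x by (intro mult_left_mono) auto
      moreover have "(1-x) * (real k * c) \<le> 1 * (real k * c)"
        using x c by (intro mult_right_mono) auto
      ultimately have "(1-x)^(Suc k) - real k * c \<le> (1-x) * a k"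
        by (simp add: algebra_simps)
      moreover have "a (Suc k) \<ge> (1-x) * a k - c" using st k by simp
      ultimately show "a (Suc k) \<ge> (1-x)^(Suc k) - real (Suc k) * c"
        by (simp add: algebra_simps)
    qed
  qed
  then show ?thesis by simp
qed

context setting
begin

definition BT :: real where "BT = (SOME B. 0 \<le> B \<and> (\<forall>z. \<bar>Tf e z\<bar> \<le> B))"
definition BS :: real where "BS = (SOME B. 0 \<le> B \<and> (\<forall>z. \<bar>Sf e z\<bar> \<le> B))"

lemma BT: "0 \<le> BT" "\<bar>Tf e z\<bar> \<le> BT"
proof -
  have "\<exists>B\<ge>0. \<forall>z. \<bar>Tf e z\<bar> \<le> B"
    by (rule bounded_supp[OF Tf_cont]) (use supp(4)[OF e0] in auto)
  then have "0 \<le> BT \<and> (\<forall>z. \<bar>Tf e z\<bar> \<le> BT)"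
    unfolding BT_def by (rule someI_ex[where P="\<lambda>B. 0 \<le> B \<and> (\<forall>z. \<bar>Tf e z\<bar> \<le> B)"])
  then show "0 \<le> BT" "\<bar>Tf e z\<bar> \<le> BT" by auto
qed

lemma BS: "0 \<le> BS" "\<bar>Sf e z\<bar> \<le> BS"
proof -
  have "\<exists>B\<ge>0. \<forall>z. \<bar>Sf e z\<bar> \<le> B"
    by (rule bounded_supp[OF Sf_cont]) (use supp(6)[OF e0] in auto)
  then have "0 \<le> BS \<and> (\<forall>z. \<bar>Sf e z\<bar> \<le> BS)"
    unfolding BS_def by (rule someI_ex[where P="\<lambda>B. 0 \<le> B \<and> (\<forall>z. \<bar>Sf e z\<bar> \<le> B)"])
  then show "0 \<le> BS" "\<bar>Sf e z\<bar> \<le> BS" by auto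
qed

lemma d_gg: "((\<lambda>\<rho>. gg e (exp \<rho> * z)) has_real_derivative Tf e (exp \<rho> * z)) (at \<rho>)"
proof -
  have inner: "((\<lambda>\<rho>. exp \<rho> * z) has_real_derivative exp \<rho> * z) (at \<rho>)"
    by (auto intro!: derivative_eq_intros)
  show ?thesis
    by (rule DERIV_cong[OF DERIV_chain2[OF gg_deriv inner]]) (simp add: Tf_def mult.commute)
qed

lemma d_T: "((\<lambda>\<rho>. Tf e (exp \<rho> * z)) has_real_derivative Sf e (exp \<rho> * z)) (at \<rho>)"
proof -
  have inner: "((\<lambda>\<rho>. exp \<rho> * z) has_real_derivative exp \<rho> * z) (at \<rho>)"
    by (auto intro!: derivative_eq_intros)
  show ?thesis
    by (rule DERIV_cong[OF DERIV_chain2[OF Tf_deriv inner]]) (simp add: Sf_def mult.commute)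
qed

lemma tay:
  assumes h: "0 \<le> h"
  shows "gg e (exp h * z) - gg e z \<ge> h * Tf e (exp h * z) - BS * h^2"
    and "gg e (exp h * z) - gg e z \<le> h * BT"
proof -
  have "(gg e (exp h * z) - gg e z \<ge> h * Tf e (exp h * z) - BS * h^2)
      \<and> (gg e (exp h * z) - gg e z \<le> h * BT)"
  proof (cases "h = 0")
    case True then show ?thesis using BT BS by simp
  next
    case False
    then have h0: "0 < h" using h by simp
    define k where "k = (\<lambda>\<rho>. gg e (exp \<rho> * z) - \<rho> * Tf e (exp \<rho> * z))"
    have dk: "(k has_real_derivative - \<rho> * Sf e (exp \<rho> * z)) (at \<rho>)" for \<rho>
    proof -
      have "(k has_real_derivative Tf e (exp \<rho> * z) - (1 * Tf e (exp \<rho> * z) + Sf e (exp \<rho> * z) * \<rho>)) (at \<rho>)"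
        unfolding k_def by (rule DERIV_diff[OF d_gg DERIV_mult[OF DERIV_ident d_T]])
      then show ?thesis by (rule DERIV_cong) simp
    qed
    obtain \<xi> where xi: "0 < \<xi>" "\<xi> < h" "k h - k 0 = (h - 0) * (- \<xi> * Sf e (exp \<xi> * z))"
      using MVT2[OF h0, of k "\<lambda>\<rho>. - \<rho> * Sf e (exp \<rho> * z)"] dk by blast
    have "\<xi> * Sf e (exp \<xi> * z) \<le> \<xi> * BS"
      using BS(2)[of "exp \<xi> * z"] xi by (intro mult_left_mono) auto
    also have "\<dots> \<le> h * BS" using xi BS by (intro mult_right_mono) auto
    finally have "h * (\<xi> * Sf e (exp \<xi> * z)) \<le> h * (h * BS)" using h0 by (intro mult_left_mono) auto
    then have lo: "gg e (exp h * z) - gg e z \<ge> h * Tf e (exp h * z) - BS * h^2"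
      using xi(3) unfolding k_def by (simp add: power2_eq_square algebra_simps)
    obtain \<zeta> where ze: "0 < \<zeta>" "\<zeta> < h" "gg e (exp h * z) - gg e (exp 0 * z) = (h - 0) * Tf e (exp \<zeta> * z)"
      using MVT2[OF h0, of "\<lambda>\<rho>. gg e (exp \<rho> * z)" "\<lambda>\<rho>. Tf e (exp \<rho> * z)"] d_gg by blast
    have "h * Tf e (exp \<zeta> * z) \<le> h * BT" using BT(2)[of "exp \<zeta> * z"] h0 by (intro mult_left_mono) auto
    then have hi: "gg e (exp h * z) - gg e z \<le> h * BT" using ze by simp
    show ?thesis using lo hi by simp
  qed
  then show "gg e (exp h * z) - gg e z \<ge> h * Tf e (exp h * z) - BS * h^2"
    and "gg e (exp h * z) - gg e z \<le> h * BT" by auto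
qed

definition "LG = (BT + 2*(exp T*\<mu>)*1) * M"
definition "LP = (BS + 2*(exp T*\<mu>)*BT) * M"
definition "K = \<mu> / (1 - e)"
definition "Cst = LP + K*(LG + BT*M) + BS*M"

lemma consts_nonneg: "0 \<le> LG" "0 \<le> LP" "0 \<le> K" "0 \<le> Cst"
  using BT BS M0 mu0 e1 unfolding LG_def LP_def K_def Cst_def by auto

lemma test_g: "0 \<le> r \<Longrightarrow> test_fun (\<lambda>b. gg e (exp r * (1-b)))"
  by (rule tf_comp(1)[OF gg_deriv gd_cont supp(1)[OF e0] e1])
lemma deriv_g: "0 \<le> r \<Longrightarrow> deriv (\<lambda>b. gg e (exp r * (1-b))) = (\<lambda>b. - exp r * gd e (exp r * (1-b)))"
  by (rule tf_comp(2)[OF gg_deriv gd_cont supp(1)[OF e0] e1])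
lemma test_T: "0 \<le> r \<Longrightarrow> test_fun (\<lambda>b. Tf e (exp r * (1-b)))"
  by (rule tf_comp(1)[OF Tf_deriv Td_cont supp(4)[OF e0] e1])
lemma deriv_T: "0 \<le> r \<Longrightarrow> deriv (\<lambda>b. Tf e (exp r * (1-b))) = (\<lambda>b. - exp r * Td e (exp r * (1-b)))"
  by (rule tf_comp(2)[OF Tf_deriv Td_cont supp(4)[OF e0] e1])

lemma eq_g: "(1-b) * (- exp r * gd e (exp r * (1-b))) = - Tf e (exp r * (1-b))"
  by (simp add: Tf_def algebra_simps)
lemma eq_T: "(1-b) * (- exp r * Td e (exp r * (1-b))) = - Sf e (exp r * (1-b))"
  by (simp add: Sf_def algebra_simps)

lemma eq_g2: "(1-b) * (exp r * gd e (exp r * (1-b))) = Tf e (exp r * (1-b))"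
  by (simp add: Tf_def algebra_simps)
lemma eq_T2: "(1-b) * (exp r * Td e (exp r * (1-b))) = Sf e (exp r * (1-b))"
  by (simp add: Sf_def algebra_simps)

lemma lip_g:
  assumes "0 \<le> r" "0 \<le> t" "t \<le> s" "s \<le> T"
  shows "\<bar>F (\<lambda>b. gg e (exp r * (1-b))) s - F (\<lambda>b. gg e (exp r * (1-b))) t\<bar> \<le> (s - t) * LG"
  unfolding LG_def
  by (rule lip[OF test_g[OF assms(1)] deriv_g[OF assms(1)]])
     (use gg_bounds[OF e0] BT assms in \<open>auto simp: eq_g eq_g2\<close>)

lemma lip_T:
  assumes "0 \<le> r" "0 \<le> t" "t \<le> s" "s \<le> T"
  shows "\<bar>F (\<lambda>b. Tf e (exp r * (1-b))) s - F (\<lambda>b. Tf e (exp r * (1-b))) t\<bar> \<le> (s - t) * LP"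
  unfolding LP_def
  by (rule lip[OF test_T[OF assms(1)] deriv_T[OF assms(1)]])
     (use BT BS assms in \<open>auto simp: eq_T eq_T2\<close>)

lemma integ_comp:
  fixes H :: "real \<Rightarrow> real" and B :: real
  assumes "continuous_on UNIV H" "\<And>z. \<bar>H z\<bar> \<le> B" "0 \<le> u"
  shows "integrable (w u) (\<lambda>b. H (exp r * (1-b)))"
  by (rule integ[OF assms(3) meas_comp[OF assms(1)]]) (use assms(2) in auto)

end



context setting
begin

lemma step:
  assumes t: "0 \<le> t" and h: "0 \<le> h" and th: "t + h \<le> T"
  shows "F (\<lambda>b. gg e (exp (t+h) * (1-b))) (t+h) \<ge> (1 - K*h) * F (\<lambda>b. gg e (exp t * (1-b))) t - Cst * h^2"
proof -
  define t' where "t' = t + h"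
  define \<phi>1 where "\<phi>1 = (\<lambda>b. gg e (exp t' * (1-b)))"
  define \<phi>0 where "\<phi>0 = (\<lambda>b. gg e (exp t * (1-b)))"
  define \<psi>1 where "\<psi>1 = (\<lambda>b. Tf e (exp t' * (1-b)))"
  have t'0: "0 \<le> t'" "t \<le> t'" "t' \<le> T" using t h th unfolding t'_def by auto
  have ggb: "\<bar>gg e z\<bar> \<le> 1" for z using gg_bounds(1,2)[OF e0, of z] by simp
  have int_phi1: "integrable (w u) \<phi>1" if "0 \<le> u" for u
    unfolding \<phi>1_def by (rule integ_comp[OF gg_cont ggb that])
  have int_phi0: "integrable (w u) \<phi>0" if "0 \<le> u" for u
    unfolding \<phi>0_def by (rule integ_comp[OF gg_cont ggb that])
  have int_psi1: "integrable (w u) \<psi>1" if "0 \<le> u" for u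
    unfolding \<psi>1_def by (rule integ_comp[OF Tf_cont BT(2) that])
  interpret wt: finite_measure "w t" by (rule fin[OF t])
  have sp: "space (w t) = UNIV" by (rule space_w[OF t])
  have Mt: "measure (w t) UNIV \<le> M" using Mb[OF t] t'0 by simp
  have mt0: "0 \<le> measure (w t) UNIV" by simp
  have ex: "exp t' * (1-b) = exp h * (exp t * (1-b))" for b
    unfolding t'_def by (simp add: exp_add)
  have plo: "\<phi>1 b - \<phi>0 b \<ge> h * \<psi>1 b - BS * h^2" for b
    using tay(1)[OF h, of "exp t * (1-b)"] unfolding \<phi>1_def \<phi>0_def \<psi>1_def ex .
  have phi: "\<phi>1 b - \<phi>0 b \<le> h * BT" for b
    using tay(2)[OF h, of "exp t * (1-b)"] unfolding \<phi>1_def \<phi>0_def ex .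
  have "(LINT b|w t. h * \<psi>1 b - BS * h^2) \<le> (LINT b|w t. \<phi>1 b - \<phi>0 b)"
    by (rule integral_mono) (use int_psi1[OF t] int_phi1[OF t] int_phi0[OF t] plo in auto)
  moreover have "(LINT b|w t. h * \<psi>1 b - BS * h^2) = h * F \<psi>1 t - measure (w t) UNIV * (BS * h^2)"
    using int_psi1[OF t] by (simp add: F_def sp)
  moreover have "(LINT b|w t. \<phi>1 b - \<phi>0 b) = F \<phi>1 t - F \<phi>0 t"
    using int_phi1[OF t] int_phi0[OF t] by (simp add: F_def)
  moreover have "measure (w t) UNIV * (BS * h^2) \<le> M * (BS * h^2)"
    using Mt BS by (intro mult_right_mono) auto
  ultimately have D2lo: "F \<phi>1 t - F \<phi>0 t \<ge> h * F \<psi>1 t - BS * h^2 * M" by (simp add: algebra_simps)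
  have "(LINT b|w t. \<phi>1 b - \<phi>0 b) \<le> (LINT b|w t. h * BT)"
    by (rule integral_mono) (use int_phi1[OF t] int_phi0[OF t] phi in auto)
  moreover have "(LINT b|w t. h * BT) = measure (w t) UNIV * (h * BT)" by (simp add: sp)
  moreover have "(LINT b|w t. \<phi>1 b - \<phi>0 b) = F \<phi>1 t - F \<phi>0 t"
    using int_phi1[OF t] int_phi0[OF t] by (simp add: F_def)
  moreover have "measure (w t) UNIV * (h * BT) \<le> M * (h * BT)"
    using Mt BT h by (intro mult_right_mono) auto
  ultimately have D2hi: "F \<phi>1 t - F \<phi>0 t \<le> h * BT * M" by (simp add: algebra_simps sp)
  define cst where "cst = - F \<psi>1 t - K * F \<phi>0 t - h * (LP + K * (LG + BT * M))"
  have dphi: "deriv \<phi>1 = (\<lambda>b. - exp t' * gd e (exp t' * (1-b)))"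
    unfolding \<phi>1_def by (rule deriv_g[OF t'0(1)])
  have Gge: "Gf \<phi>1 u \<ge> cst" if u: "u \<in> {t..t'}" for u
  proof -
    have u0: "0 \<le> u" "u \<le> T" using u t t'0 by auto
    define I where "I = (\<lambda>b. (1 - b) * deriv \<phi>1 b + kappa \<mu> u b * (\<phi>1 0 - \<phi>1 b))"
    have Ieq: "I = (\<lambda>b. - \<psi>1 b + kappa \<mu> u b * (\<phi>1 0 - \<phi>1 b))"
      unfolding I_def dphi \<psi>1_def by (simp add: eq_g2)
    have [measurable]: "\<psi>1 \<in> borel_measurable borel" unfolding \<psi>1_def by (rule meas_comp[OF Tf_cont])
    have [measurable]: "\<phi>1 \<in> borel_measurable borel" unfolding \<phi>1_def by (rule meas_comp[OF gg_cont])
    have [measurable]: "(\<lambda>b. kappa \<mu> u b) \<in> borel_measurable borel" by (rule kap_meas)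
    have Imeas: "I \<in> borel_measurable borel" unfolding Ieq by measurable
    have Ibnd: "\<bar>I b\<bar> \<le> BT + (exp T * \<mu>) * 2" if b: "0 \<le> b" for b
    proof -
      have k0: "0 \<le> kappa \<mu> u b" using kap_bounds[OF mu0 b] by simp
      have "kappa \<mu> u b \<le> exp u * \<mu>" using kap_bounds[OF mu0 b] by simp
      also have "\<dots> \<le> exp T * \<mu>" using u0 mu0 by (intro mult_right_mono) auto
      finally have k1: "kappa \<mu> u b \<le> exp T * \<mu>" .
      have d: "\<bar>\<phi>1 0 - \<phi>1 b\<bar> \<le> 2" using ggb[of "exp t' * (1-0)"] ggb[of "exp t' * (1-b)"]
        unfolding \<phi>1_def by linarith
      have "\<bar>kappa \<mu> u b * (\<phi>1 0 - \<phi>1 b)\<bar> = kappa \<mu> u b * \<bar>\<phi>1 0 - \<phi>1 b\<bar>"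
        using k0 by (simp add: abs_mult)
      also have "\<dots> \<le> (exp T * \<mu>) * 2" using k0 k1 d by (intro mult_mono) auto
      finally have "\<bar>kappa \<mu> u b * (\<phi>1 0 - \<phi>1 b)\<bar> \<le> (exp T * \<mu>) * 2" .
      moreover have "\<bar>\<psi>1 b\<bar> \<le> BT" unfolding \<psi>1_def by (rule BT(2))
      ultimately show ?thesis unfolding Ieq by linarith
    qed
    have intI: "integrable (w u) I" by (rule integ[OF u0(1) Imeas Ibnd])
    have Ilo: "I b \<ge> - \<psi>1 b - K * \<phi>1 b" if b: "0 \<le> b" for b
    proof -
      have k0: "0 \<le> kappa \<mu> u b" using kap_bounds[OF mu0 b] by simp
      have p0: "0 \<le> \<phi>1 0" "0 \<le> \<phi>1 b" unfolding \<phi>1_def using gg_bounds[OF e0] by auto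
      have "kappa \<mu> u b * \<phi>1 b \<le> K * \<phi>1 b"
      proof (cases "\<bar>exp t' * (1-b) - 1\<bar> < e")
        case True
        have "kappa \<mu> u b \<le> K" unfolding K_def
          by (rule kap_K[OF mu0 u0(1) _ True e1]) (use u e0 in auto)
        then show ?thesis using p0 by (intro mult_right_mono) auto
      next
        case False
        then have "\<phi>1 b = 0" unfolding \<phi>1_def by (intro supp(1)[OF e0]) simp
        then show ?thesis by simp
      qed
      moreover have "0 \<le> kappa \<mu> u b * \<phi>1 0" using k0 p0 by simp
      ultimately show ?thesis unfolding Ieq by (simp add: algebra_simps)
    qed
    have "(LINT b|w u. - \<psi>1 b - K * \<phi>1 b) \<le> (LINT b|w u. I b)"
      by (rule integral_mono_AE) (use int_psi1[OF u0(1)] int_phi1[OF u0(1)] intI AEnn[OF u0(1)] Ilo in \<open>auto elim!: eventually_mono\<close>)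
    moreover have "(LINT b|w u. - \<psi>1 b - K * \<phi>1 b) = - F \<psi>1 u - K * F \<phi>1 u"
      using int_psi1[OF u0(1)] int_phi1[OF u0(1)] by (simp add: F_def)
    moreover have "Gf \<phi>1 u = (LINT b|w u. I b)" unfolding Gf_def I_def by simp
    moreover have "F \<psi>1 u \<le> F \<psi>1 t + h * LP"
    proof -
      have "\<bar>F \<psi>1 u - F \<psi>1 t\<bar> \<le> (u - t) * LP"
        unfolding \<psi>1_def by (rule lip_T) (use u t'0 t in auto)
      moreover have "(u - t) * LP \<le> h * LP"
        using u consts_nonneg unfolding t'_def by (intro mult_right_mono) auto
      ultimately show ?thesis by linarith
    qed
    moreover have "F \<phi>1 u \<le> F \<phi>0 t + h * BT * M + h * LG"
    proof -
      have "\<bar>F \<phi>1 u - F \<phi>1 t\<bar> \<le> (u - t) * LG"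
        unfolding \<phi>1_def by (rule lip_g) (use u t'0 t in auto)
      moreover have "(u - t) * LG \<le> h * LG"
        using u consts_nonneg unfolding t'_def by (intro mult_right_mono) auto
      ultimately show ?thesis using D2hi by linarith
    qed
    ultimately show ?thesis
    proof -
      assume a: "(LINT b|w u. - \<psi>1 b - K * \<phi>1 b) \<le> (LINT b|w u. I b)"
        "(LINT b|w u. - \<psi>1 b - K * \<phi>1 b) = - F \<psi>1 u - K * F \<phi>1 u"
        "Gf \<phi>1 u = (LINT b|w u. I b)" "F \<psi>1 u \<le> F \<psi>1 t + h * LP"
        "F \<phi>1 u \<le> F \<phi>0 t + h * BT * M + h * LG"
      have "K * F \<phi>1 u \<le> K * (F \<phi>0 t + h * BT * M + h * LG)"
        using a(5) consts_nonneg by (intro mult_left_mono) auto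
      then have "K * F \<phi>1 u \<le> K * F \<phi>0 t + h * (K * (LG + BT * M))" by (simp add: algebra_simps)
      moreover have "cst = - F \<psi>1 t - K * F \<phi>0 t - h * LP - h * (K * (LG + BT * M))"
        unfolding cst_def by (simp add: algebra_simps)
      ultimately show ?thesis using a by linarith
    qed
  qed
  have "((\<lambda>u. cst) has_integral ((t' - t) * cst)) {t..t'}"
    using has_integral_const_real[of cst t t'] t'0 by simp
  moreover have "(Gf \<phi>1 has_integral (F \<phi>1 t' - F \<phi>1 t)) {t..t'}"
    unfolding \<phi>1_def by (rule interval_int[OF test_g[OF t'0(1)] t t'0(2)])
  ultimately have "(t' - t) * cst \<le> F \<phi>1 t' - F \<phi>1 t"
    by (rule has_integral_le) (use Gge in auto)
  then have D1: "h * cst \<le> F \<phi>1 t' - F \<phi>1 t" using t'0 unfolding t'_def by simp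
  have fin: "(1 - K*h) * F \<phi>0 t - Cst * h^2 = F \<phi>0 t + h * cst + (h * F \<psi>1 t - BS * h^2 * M)"
    unfolding cst_def Cst_def by (simp add: algebra_simps power2_eq_square)
  have "F \<phi>1 t' \<ge> (1 - K*h) * F \<phi>0 t - Cst * h^2"
    using fin D1 D2lo by linarith
  then show ?thesis unfolding \<phi>1_def \<phi>0_def t'_def .
qed

end



context setting
begin

lemma main: "F (\<lambda>b. gg e (exp T * (1-b))) T \<ge> exp (-(K*T))"
proof -
  obtain n0 :: nat where n0: "K * T \<le> real n0" using real_arch_simple by blast
  have lb: "F (\<lambda>b. gg e (exp T * (1-b))) T \<ge> (1 + (-(K*T)) / real N)^N - Cst * T^2 / real N"
    if N: "N \<ge> Suc n0" for N
  proof -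
    have Npos: "0 < real N" using N by simp
    define a where "a = (\<lambda>k::nat. F (\<lambda>b. gg e (exp (real k * T / real N) * (1-b))) (real k * T / real N))"
    define x where "x = K * (T / real N)"
    have x0: "0 \<le> x" unfolding x_def using consts_nonneg T0 Npos by simp
    have "K * T \<le> real N" using n0 N by linarith
    then have x1: "x \<le> 1" unfolding x_def using Npos by (simp add: divide_le_eq)
    have c0: "0 \<le> Cst * (T / real N)^2" using consts_nonneg by simp
    have st: "a (Suc k) \<ge> (1 - x) * a k - Cst * (T / real N)^2" if k: "k < N" for k
    proof -
      have t0: "0 \<le> real k * T / real N" using T0 Npos by simp
      have h0: "0 \<le> T / real N" using T0 Npos by simp
      have eq: "real k * T / real N + T / real N = real (Suc k) * T / real N"
        by (simp add: add_divide_distrib[symmetric] algebra_simps)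
      have "real (Suc k) * T \<le> real N * T" using k T0 by (intro mult_right_mono) auto
      then have le: "real (Suc k) * T / real N \<le> T" using Npos by (simp add: divide_le_eq mult.commute)
      have "F (\<lambda>b. gg e (exp (real k * T / real N + T / real N) * (1-b))) (real k * T / real N + T / real N)
          \<ge> (1 - K * (T / real N)) * F (\<lambda>b. gg e (exp (real k * T / real N) * (1-b))) (real k * T / real N)
             - Cst * (T / real N)^2"
        by (rule step[OF t0 h0]) (use eq le in simp)
      then show ?thesis unfolding a_def x_def eq .
    qed
    have m0: "(\<lambda>b. gg e (1-b)) \<in> borel_measurable borel"
      using meas_comp[OF gg_cont, of e 0] by simp
    have a0: "a 0 = 1"
      unfolding a_def F_def using gg_bounds(3)[OF e0] m0 by (simp add: w0 integral_return)
    have "a N \<ge> (1-x)^N - real N * (Cst * (T / real N)^2)"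
      by (rule iter[OF st x0 x1 c0 a0])
    moreover have "a N = F (\<lambda>b. gg e (exp T * (1-b))) T" unfolding a_def using Npos by simp
    moreover have "1 - x = 1 + (-(K*T)) / real N" unfolding x_def by simp
    moreover have "real N * (Cst * (T / real N)^2) = Cst * T^2 / real N"
      using Npos by (simp add: power2_eq_square)
    ultimately show ?thesis by simp
  qed
  have lim: "(\<lambda>N. (1 + (-(K*T)) / real N)^N - Cst * T^2 / real N) \<longlonglongrightarrow> exp (-(K*T)) - 0"
    by (intro tendsto_diff tendsto_exp_limit_sequentially lim_const_over_n)
  have "exp (-(K*T)) - 0 \<le> F (\<lambda>b. gg e (exp T * (1-b))) T"
    by (rule LIMSEQ_le_const2[OF lim]) (rule exI[of _ "Suc n0"], use lb in auto)
  then show ?thesis by simp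
qed

lemma band: "measure (w T) {b. \<bar>exp T * (1-b) - 1\<bar> \<le> e} \<ge> exp (-(K*T))"
proof -
  define S where "S = {b::real. \<bar>exp T * (1-b) - 1\<bar> \<le> e}"
  have S: "S \<in> sets borel" unfolding S_def by measurable
  have ggb: "\<bar>gg e z\<bar> \<le> 1" for z using gg_bounds(1,2)[OF e0, of z] by simp
  have i1: "integrable (w T) (\<lambda>b. gg e (exp T * (1-b)))"
    by (rule integ_comp[OF gg_cont ggb T0])
  have i2: "integrable (w T) (indicator S :: real \<Rightarrow> real)"
    by (rule integ[OF T0, of _ 1]) (use S in \<open>auto simp: indicator_def\<close>)
  have le: "gg e (exp T * (1-b)) \<le> indicator S b" for b
  proof (cases "b \<in> S")
    case True then show ?thesis using gg_bounds(2)[OF e0] by simp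
  next
    case False
    then have "e \<le> \<bar>exp T * (1-b) - 1\<bar>" unfolding S_def by simp
    then show ?thesis using False supp(1)[OF e0] by simp
  qed
  have "F (\<lambda>b. gg e (exp T * (1-b))) T \<le> (LINT b|w T. indicator S b)"
    unfolding F_def by (rule integral_mono[OF i1 i2 le])
  also have "\<dots> = measure (w T) S" using space_w[OF T0] by simp
  finally show ?thesis using main unfolding S_def by linarith
qed

end



context setting
begin
lemma band': "exp (- (\<mu> / (1 - e)) * T) \<le> measure (w T) {b. \<bar>exp T * (1-b) - 1\<bar> \<le> e}"
  using band unfolding K_def by simp
end

lemma atom:
  fixes \<mu> :: real and w :: "real \<Rightarrow> real measure" and M \<tau> :: real
  assumes mu: "0 < \<mu>" "\<mu> < 1" and sol: "measure_solution \<mu> w"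
    and Mb: "\<And>u. 0 \<le> u \<Longrightarrow> u \<le> \<tau> \<Longrightarrow> measure (w u) UNIV \<le> M" and tau: "0 \<le> \<tau>"
  shows "exp (- \<mu> * \<tau>) \<le> measure (w \<tau>) {1 - exp (- \<tau>)}"
proof -
  define S where "S = (\<lambda>n::nat. {b::real. \<bar>exp \<tau> * (1-b) - 1\<bar> \<le> 1 / (real n + 2)})"
  have set: "setting \<mu> w M \<tau> (1 / (real n + 2))" for n
    by unfold_locales (use mu sol Mb tau in \<open>auto simp: field_simps\<close>)
  have lowb: "exp (- (\<mu> / (1 - 1 / (real n + 2))) * \<tau>) \<le> measure (w \<tau>) (S n)" for n
    unfolding S_def by (rule setting.band'[OF set])
  have fm: "finite_measure (w \<tau>)" using sol tau unfolding measure_solution_def by auto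
  have sw: "sets (w \<tau>) = sets borel" using sol tau unfolding measure_solution_def by auto
  have Ssets: "range S \<subseteq> sets (w \<tau>)"
  proof
    fix A assume "A \<in> range S"
    then obtain n where "A = S n" by auto
    moreover have "S n \<in> sets borel" unfolding S_def by measurable
    ultimately show "A \<in> sets (w \<tau>)" using sw by simp
  qed
  have dec: "decseq S"
  proof (rule decseq_SucI)
    fix n
    have "1 / (real (Suc n) + 2) \<le> 1 / (real n + 2)" by (simp add: frac_le)
    then show "S (Suc n) \<subseteq> S n" unfolding S_def by auto
  qed
  have inter: "(\<Inter>n. S n) = {1 - exp (- \<tau>)}"
  proof
    show "{1 - exp (- \<tau>)} \<subseteq> (\<Inter>n. S n)"
      unfolding S_def by (auto simp: exp_minus field_simps)
    show "(\<Inter>n. S n) \<subseteq> {1 - exp (- \<tau>)}"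
    proof
      fix b assume b: "b \<in> (\<Inter>n. S n)"
      have y0: "\<bar>exp \<tau> * (1-b) - 1\<bar> = 0"
      proof (rule ccontr)
        assume "\<bar>exp \<tau> * (1-b) - 1\<bar> \<noteq> 0"
        then have "0 < \<bar>exp \<tau> * (1-b) - 1\<bar>" by simp
        then obtain n :: nat where n: "0 < n" "inverse (real n) < \<bar>exp \<tau> * (1-b) - 1\<bar>"
          using ex_inverse_of_nat_less by blast
        have "1 / (real n + 2) \<le> inverse (real n)" using n by (simp add: inverse_eq_divide frac_le)
        moreover have "\<bar>exp \<tau> * (1-b) - 1\<bar> \<le> 1 / (real n + 2)" using b unfolding S_def by auto
        ultimately show False using n by linarith
      qed
      then have "exp \<tau> * (1-b) = 1" by simp
      then have "1 - b = exp (- \<tau>)" by (simp add: exp_minus field_simps)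
      then show "b \<in> {1 - exp (- \<tau>)}" by simp
    qed
  qed
  have lim1: "(\<lambda>n. measure (w \<tau>) (S n)) \<longlonglongrightarrow> measure (w \<tau>) {1 - exp (- \<tau>)}"
    using finite_measure.finite_Lim_measure_decseq[OF fm Ssets dec] inter by simp
  have a: "(\<lambda>n. 1 / (real n + 2)) \<longlonglongrightarrow> 0"
    using LIMSEQ_ignore_initial_segment[OF lim_1_over_n, of 2] by (simp add: add.commute)
  have lim2: "(\<lambda>n. exp (- (\<mu> / (1 - 1 / (real n + 2))) * \<tau>)) \<longlonglongrightarrow> exp (- (\<mu> / (1 - 0)) * \<tau>)"
    by (intro tendsto_intros a) simp
  show ?thesis
    using LIMSEQ_le[OF lim2 lim1] lowb by auto
qed




theorem proposition5:
  fixes \<mu> :: real and w :: "real \<Rightarrow> real measure" and C :: "real \<Rightarrow> real"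
  assumes "0 < \<mu>" and "\<mu> < 1"
    and "measure_solution \<mu> w"
    and "\<And>\<tau>. \<tau> \<ge> 0 \<Longrightarrow> C \<tau> > 0 \<and> (LINT b:{0..<1}|lborel. Wprof \<mu> C \<tau> b) = 1"
    and "\<tau> \<ge> 0"
  shows "tv_norm {0..<1} (\<lambda>A. (LINT b:A|lborel. Wprof \<mu> C \<tau> b) - measure (w \<tau>) A)
           \<ge> exp (- \<mu> * \<tau>)"
proof -
  note sol = assms(3) and tau = assms(5)
  obtain M where Mb: "\<forall>u\<in>{0..\<tau>}. measure (w u) UNIV \<le> M"
    using sol tau unfolding measure_solution_def by blast
  define x0 where "x0 = 1 - exp (- \<tau>)"
  have at: "exp (- \<mu> * \<tau>) \<le> measure (w \<tau>) {x0}"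
    unfolding x0_def by (rule atom[OF assms(1,2) sol _ tau]) (use Mb in auto)
  have x0r: "0 \<le> x0" "x0 < 1" unfolding x0_def using tau by auto
  have fm: "finite_measure (w \<tau>)" using sol tau unfolding measure_solution_def by auto
  have sw: "sets (w \<tau>) = sets borel" using sol tau unfolding measure_solution_def by auto
  have spw: "space (w \<tau>) = UNIV" using sets_eq_imp_space_eq[OF sw] by simp
  define W where "W = Wprof \<mu> C \<tau>"
  define \<nu> where "\<nu> = (\<lambda>A. (LINT b:A|lborel. Wprof \<mu> C \<tau> b) - measure (w \<tau>) A)"
  define Parts where "Parts = {P. finite P \<and> disjoint P \<and> \<Union>P = {0..<1::real} \<and> P \<subseteq> sets borel}"
  have Cpos: "C \<tau> > 0" and W1: "(LINT b:{0..<1}|lborel. W b) = 1" using assms(4)[OF tau] unfolding W_def by auto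
  have Wnn: "0 \<le> W b" for b unfolding W_def Wprof_def using Cpos by simp
  have Wint_nn: "0 \<le> (LINT b:A|lborel. W b)" for A
    unfolding set_lebesgue_integral_def
    by (rule integral_nonneg_AE) (use Wnn in \<open>auto simp: indicator_def\<close>)
  have Wsi: "set_integrable lborel {0..<1} W"
  proof (rule ccontr)
    assume "\<not> set_integrable lborel {0..<1} W"
    then have "(LINT b:{0..<1}|lborel. W b) = 0"
      unfolding set_integrable_def set_lebesgue_integral_def by (rule not_integrable_integral_eq)
    then show False using W1 by simp
  qed
  have bound: "(\<Sum>A\<in>P. \<bar>\<nu> A\<bar>) \<le> 1 + measure (w \<tau>) UNIV" if P: "P \<in> Parts" for P
  proof -
    have fin: "finite P" and dis: "disjoint P" and un: "\<Union>P = {0..<1}" and sb: "P \<subseteq> sets borel"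
      using P unfolding Parts_def by auto
    have df: "disjoint_family_on (\<lambda>i. i) P"
      using dis unfolding disjoint_family_on_def pairwise_def disjnt_def by auto
    have "(LINT x:(\<Union>i\<in>P. i)|lborel. W x) = (\<Sum>i\<in>P. LINT x:i|lborel. W x)"
    proof (rule set_integral_finite_Union[OF fin df])
      fix i assume i: "i \<in> P"
      then have "i \<subseteq> {0..<1}" using un by auto
      then show "set_integrable lborel i W"
        using set_integrable_subset[OF Wsi] i sb by auto
      show "i \<in> sets lborel" using i sb by auto
    qed
    then have sW: "(\<Sum>A\<in>P. LINT x:A|lborel. W x) = 1" using un W1 by simp
    have "measure (w \<tau>) (\<Union>i\<in>P. i) = (\<Sum>i\<in>P. measure (w \<tau>) i)"
      by (rule finite_measure.finite_measure_finite_Union[OF fm fin _ df]) (use sb sw in auto)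
    moreover have "measure (w \<tau>) (\<Union>i\<in>P. i) \<le> measure (w \<tau>) UNIV"
      using finite_measure.bounded_measure[OF fm] spw by metis
    ultimately have sw2: "(\<Sum>A\<in>P. measure (w \<tau>) A) \<le> measure (w \<tau>) UNIV" by simp
    have "(\<Sum>A\<in>P. \<bar>\<nu> A\<bar>) \<le> (\<Sum>A\<in>P. (LINT x:A|lborel. W x) + measure (w \<tau>) A)"
    proof (rule sum_mono)
      fix A assume "A \<in> P"
      have "0 \<le> (LINT x:A|lborel. W x)" by (rule Wint_nn)
      moreover have "0 \<le> measure (w \<tau>) A" by simp
      ultimately show "\<bar>\<nu> A\<bar> \<le> (LINT x:A|lborel. W x) + measure (w \<tau>) A"
        unfolding \<nu>_def W_def by linarith
    qed
    also have "\<dots> = (\<Sum>A\<in>P. LINT x:A|lborel. W x) + (\<Sum>A\<in>P. measure (w \<tau>) A)"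
      by (rule sum.distrib)
    finally show ?thesis using sW sw2 by linarith
  qed
  define P0 where "P0 = {{x0}, {0..<1} - {x0}}"
  have P0: "P0 \<in> Parts"
    unfolding Parts_def P0_def using x0r
    by (auto simp: pairwise_def disjnt_def)
  have ne: "{x0} \<noteq> {0..<1} - {x0}" by auto
  have zero: "(LINT b:{x0}|lborel. Wprof \<mu> C \<tau> b) = 0"
    unfolding set_lebesgue_integral_def
    by (rule integral_eq_zero_AE) (use AE_lborel_singleton[of x0] in \<open>auto elim!: eventually_mono\<close>)
  have "exp (- \<mu> * \<tau>) \<le> \<bar>\<nu> {x0}\<bar>"
    unfolding \<nu>_def zero using at by simp
  also have "\<dots> \<le> (\<Sum>A\<in>P0. \<bar>\<nu> A\<bar>)" unfolding P0_def using ne by simp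
  also have "\<dots> \<le> (SUP P\<in>Parts. \<Sum>A\<in>P. \<bar>\<nu> A\<bar>)"
    by (rule cSUP_upper[OF P0 bdd_aboveI2]) (rule bound)
  finally show ?thesis unfolding tv_norm_def Parts_def \<nu>_def .
qed


end
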